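(* Let $f\colon\mathbb{R}^n\to\mathbb{R}$ be continuous and suppose there is $\gamma>0$ such that (i) the set $S_\gamma=\{z\in\mathbb{R}^n : f(z)\le\inf f+\gamma\}$ is compact, and (ii) every $x\in S_\gamma$ with $0\in\partial f(x)$ is a global minimizer of $f$. Let $t\in(0,\infty)$ and let $x\in\mathbb{R}^n$ be a local minimizer of $u(\cdot,t)$. If $t\ge\|x-x^\star\|^2/(2\gamma)$ for some global minimizer $x^\star$ of $f$, then $x$ is a global minimizer of $f$.
   Context: $u(x,t)=\inf_{z\in\mathbb{R}^n}\big(f(z)+\frac{1}{2t}\|z-x\|^2\big)$. The subdifferential $\partial f(\bar x)$ is the set of all $v\in\mathbb{R}^n$ such that $f(x)\ge f(\bar x)+\langle v,x-\bar x\rangle+o(\|x-\bar x\|)$ as $x\to\bar x$. *)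

theory Defs
  imports "HOL-Analysis.Analysis" "HOL-Library.Landau_Symbols"
begin

definition moreau_u :: "('a::euclidean_space \<Rightarrow> real) \<Rightarrow> 'a \<Rightarrow> real \<Rightarrow> real" where
  "moreau_u f x t = (INF z. f z + (norm (z - x))^2 / (2 * t))"

definition subdiff :: "('a::euclidean_space \<Rightarrow> real) \<Rightarrow> 'a \<Rightarrow> 'a set" where
  "subdiff f xb = {v. \<exists>g. g \<in> o[at xb](\<lambda>y. norm (y - xb)) \<and>
      (\<forall>\<^sub>F y in at xb. f y \<ge> f xb + v \<bullet> (y - xb) + g y)}"

definition global_minimizer :: "('a \<Rightarrow> real) \<Rightarrow> 'a \<Rightarrow> bool" where
  "global_minimizer f x \<longleftrightarrow> (\<forall>z. f x \<le> f z)"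

definition local_minimizer :: "('a::metric_space \<Rightarrow> real) \<Rightarrow> 'a \<Rightarrow> bool" where
  "local_minimizer g x \<longleftrightarrow> (\<exists>e>0. \<forall>y. dist y x < e \<longrightarrow> g x \<le> g y)"

end

theory Submission
  imports Defs
begin

theorem lemma6:
  fixes f :: "'a::euclidean_space \<Rightarrow> real" and \<gamma> t :: real and x xstar :: 'a
  assumes "continuous_on UNIV f"
    and "\<gamma> > 0"
    and "compact {z. f z \<le> (INF w. f w) + \<gamma>}"
    and "\<forall>y\<in>{z. f z \<le> (INF w. f w) + \<gamma>}. 0 \<in> subdiff f y \<longrightarrow> global_minimizer f y"
    and "t > 0"
    and "local_minimizer (\<lambda>y. moreau_u f y t) x"
    and "global_minimizer f xstar"
    and "t \<ge> (norm (x - xstar))^2 / (2 * \<gamma>)"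
  shows "global_minimizer f x"
proof -
  note cf = assms(1) and gp = assms(2) and tp = assms(5)
  have fmin: "\<And>w. f xstar \<le> f w" using assms(7) unfolding global_minimizer_def by blast
  define h where "h = (\<lambda>y z. f z + (norm (z - y))^2 / (2 * t))"
  have hlow: "\<And>y z. f xstar \<le> h y z" unfolding h_def using fmin tp
    by (smt (verit) divide_nonneg_pos zero_le_power2)
  have bdd: "\<And>y. bdd_below (range (h y))" using hlow by (meson bdd_belowI2)
  have u_eq: "\<And>y. moreau_u f y t = (INF z. h y z)" unfolding moreau_u_def h_def by simp
  have u_le: "\<And>y z. moreau_u f y t \<le> h y z" unfolding u_eq by (rule cINF_lower[OF bdd]) simp
  have hcont: "continuous_on UNIV (h x)" unfolding h_def
    using tp by (intro continuous_intros cf) simp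
  define K where "K = {z. h x z \<le> h x x}"
  have Kclosed: "closed K" unfolding K_def
    using continuous_closed_preimage_constant[of UNIV "h x"] hcont
    by (simp add: closed_Collect_le hcont continuous_on_const)
  have Kbdd: "bounded K"
  proof -
    have "K \<subseteq> cball x (sqrt (2 * t * (h x x - f xstar)))"
    proof
      fix z assume "z \<in> K"
      then have "f z + (norm (z - x))^2 / (2 * t) \<le> h x x" unfolding K_def h_def by simp
      with fmin[of z] have "(norm (z - x))^2 / (2 * t) \<le> h x x - f xstar" by linarith
      then have "(norm (z - x))^2 \<le> 2 * t * (h x x - f xstar)" using tp
        by (simp add: divide_le_eq mult.commute)
      then have "norm (z - x) \<le> sqrt (2 * t * (h x x - f xstar))"
        using real_le_rsqrt by blast
      then show "z \<in> cball x (sqrt (2 * t * (h x x - f xstar)))"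
        by (simp add: dist_norm norm_minus_commute)
    qed
    then show ?thesis using bounded_cball bounded_subset by blast
  qed
  have "compact K" using Kclosed Kbdd compact_eq_bounded_closed by blast
  moreover have "K \<noteq> {}" unfolding K_def by auto
  moreover have "continuous_on K (h x)" using hcont continuous_on_subset by blast
  ultimately obtain z where zK: "z \<in> K" and zmin: "\<And>w. w \<in> K \<Longrightarrow> h x z \<le> h x w"
    using continuous_attains_inf by metis
  have zmin2: "\<And>w. h x z \<le> h x w"
  proof -
    fix w show "h x z \<le> h x w"
      using zmin[of w] zK unfolding K_def by (cases "w \<in> K") (auto simp: K_def)
  qed
  have uxz: "moreau_u f x t = h x z"
    using u_le[of x z] unfolding u_eq by (metis cINF_greatest UNIV_not_empty antisym zmin2 u_eq)
  obtain e where ep: "e > 0" and eloc: "\<And>y. dist y x < e \<Longrightarrow> moreau_u f x t \<le> moreau_u f y t"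
    using assms(6) unfolding local_minimizer_def by blast
  have zx: "z = x"
  proof (rule ccontr)
    assume "z \<noteq> x"
    define n where "n = norm (z - x)"
    have np: "n > 0" using \<open>z \<noteq> x\<close> n_def by simp
    define s where "s = min (1/2) (e / (2 * n))"
    have sp: "s > 0" "s \<le> 1/2" "s * n \<le> e / 2" using ep np unfolding s_def
      by (auto simp: min_def field_simps)
    define y where "y = x + s *\<^sub>R (z - x)"
    have "dist y x = s * n" unfolding y_def n_def dist_norm using sp by simp
    then have "dist y x < e" using sp ep by linarith
    then have "moreau_u f x t \<le> moreau_u f y t" by (rule eloc)
    also have "\<dots> \<le> h y z" by (rule u_le)
    also have "h y z = f z + ((1 - s) * n)^2 / (2 * t)"
    proof -
      have "z - y = (1 - s) *\<^sub>R (z - x)" unfolding y_def by (simp add: algebra_simps)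
      then have "norm (z - y) = (1 - s) * n" using sp unfolding n_def by simp
      then show ?thesis unfolding h_def by simp
    qed
    also have "\<dots> < f z + n^2 / (2 * t)"
    proof -
      have "((1 - s) * n)^2 < n^2" using sp np
      proof -
        have a: "0 \<le> (1 - s) * n" using sp np by simp
        have b: "(1 - s) * n < n" using sp np by simp
        show ?thesis using power_strict_mono[OF b a, of 2] by simp
      qed
      then show ?thesis using tp by (simp add: divide_strict_right_mono)
    qed
    also have "\<dots> = moreau_u f x t" unfolding uxz h_def n_def by simp
    finally show False by simp
  qed
  have prox: "\<And>w. f x \<le> f w + (norm (w - x))^2 / (2 * t)"
    using zmin2 unfolding zx h_def by simp
  have sub: "0 \<in> subdiff f x"
    unfolding subdiff_def
  proof (intro CollectI exI conjI)
    show "(\<lambda>y. - ((norm (y - x))^2 / (2 * t))) \<in> o[at x](\<lambda>y. norm (y - x))"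
    proof (rule landau_o.smallI)
      fix c :: real assume cp: "c > 0"
      show "\<forall>\<^sub>F y in at x. norm (- ((norm (y - x))^2 / (2 * t))) \<le> c * norm (norm (y - x))"
        unfolding eventually_at
      proof (intro exI[of _ "2 * t * c"] conjI ballI impI)
        show "0 < 2 * t * c" using cp tp by simp
        fix y :: 'a assume "y \<in> UNIV" "y \<noteq> x \<and> dist y x < 2 * t * c"
        then have d: "norm (y - x) < 2 * t * c" by (simp add: dist_norm)
        have "(norm (y - x))^2 / (2 * t) \<le> c * norm (y - x)"
        proof -
          have "norm (y - x) * norm (y - x) \<le> (2 * t * c) * norm (y - x)"
            using d by (intro mult_right_mono) auto
          then have "(norm (y - x))^2 \<le> c * norm (y - x) * (2 * t)"
            by (simp add: power2_eq_square mult_ac)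
          then show ?thesis using tp by (simp add: divide_le_eq)
        qed
        then show "norm (- ((norm (y - x))^2 / (2 * t))) \<le> c * norm (norm (y - x))"
          using tp by simp
      qed
    qed
    show "\<forall>\<^sub>F y in at x. f x + 0 \<bullet> (y - x) + - ((norm (y - x))^2 / (2 * t)) \<le> f y"
      using prox by (intro always_eventually allI) (simp add: algebra_simps)
  qed
  have "(INF w. f w) \<ge> f xstar" by (rule cINF_greatest) (auto simp: fmin)
  moreover have "f x \<le> f xstar + (norm (xstar - x))^2 / (2 * t)" by (rule prox)
  moreover have "(norm (xstar - x))^2 / (2 * t) \<le> \<gamma>"
  proof -
    have "(norm (x - xstar))^2 \<le> t * (2 * \<gamma>)" using assms(8) gp by (simp add: divide_le_eq)
    then have "(norm (xstar - x))^2 \<le> \<gamma> * (2 * t)" by (simp add: norm_minus_commute mult_ac)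
    then show ?thesis using tp by (simp add: divide_le_eq)
  qed
  ultimately have "x \<in> {z. f z \<le> (INF w. f w) + \<gamma>}" by simp
  then show ?thesis using assms(4) sub by blast
qed

end
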